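(* Let $A$ be a finite alphabet. Define $P,H\in I(A^* )$ by $P(u,v)=\binom{v}{u}$ and $H(u,v)=\binom{v}{u}\eta(u,v)$. Then $P=e^H$, where $e^H=\delta+H+\frac{1}{2!}H^2+\frac{1}{3!}H^3+\cdots$ (each entry of this series is a finite sum).
   Context: $A^*$ is the set of finite words over the finite alphabet $A$; $|w|$ is the length of $w$. For words $u=a_1\cdots a_k$ and $v=b_1\cdots b_n$, $\binom{v}{u}$ denotes the number of order-preserving injections $\varphi:[k]\to[n]$ with $a_i=b_{\varphi(i)}$ for all $i$ (occurrences of $u$ as a subsequence of $v$). $A^*$ is partially ordered by $u\le v$ iff $\binom{v}{u}>0$. For a locally finite poset $Q$, the incidence algebra $I(Q)$ over $\mathbb{Q}$ consists of all functions $F$ on pairs $(x,y)$ with $x\le y$, with convolution $(FG)(x,y)=\sum_{x\le z\le y}F(x,z)G(z,y)$ and identity $\delta(x,y)=[x=y]$ (Iverson bracket). $\eta(x,y)=[y\text{ covers }x]$; in $A^*$, $v$ covers $u$ iff $u\le v$ and $|v|=|u|+1$. *)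

theory Defs
  imports Complex_Main
begin

text \<open>Occurrences of u as a subsequence of v: order-preserving maps
  phi : [|u|] -> [|v|] (0-based, made extensional by phi i = 0 outside the domain)
  with u_i = v_(phi i).\<close>
definition occ_maps :: "'a list \<Rightarrow> 'a list \<Rightarrow> (nat \<Rightarrow> nat) set" where
  "occ_maps u v = {\<phi>. (\<forall>i<length u. \<phi> i < length v \<and> u ! i = v ! (\<phi> i))
                     \<and> (\<forall>i j. i < j \<and> j < length u \<longrightarrow> \<phi> i < \<phi> j)
                     \<and> (\<forall>i. length u \<le> i \<longrightarrow> \<phi> i = 0)}"

definition binom_w :: "'a list \<Rightarrow> 'a list \<Rightarrow> nat" where
  "binom_w v u = card (occ_maps u v)"   \<comment> \<open>binom_w v u = (v choose u)\<close>

definition wle :: "'a list \<Rightarrow> 'a list \<Rightarrow> bool" where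
  "wle u v \<longleftrightarrow> binom_w v u > 0"

text \<open>Incidence algebra I(A^*) over the rationals: functions on pairs (only values at
  pairs x \<le> y are relevant).\<close>
definition inc_conv :: "('a list \<Rightarrow> 'a list \<Rightarrow> rat) \<Rightarrow> ('a list \<Rightarrow> 'a list \<Rightarrow> rat)
                        \<Rightarrow> 'a list \<Rightarrow> 'a list \<Rightarrow> rat" where
  "inc_conv F G x y = (\<Sum>z\<in>{z. wle x z \<and> wle z y}. F x z * G z y)"

definition inc_delta :: "'a list \<Rightarrow> 'a list \<Rightarrow> rat" where
  "inc_delta x y = (if x = y then 1 else 0)"

fun inc_pow :: "('a list \<Rightarrow> 'a list \<Rightarrow> rat) \<Rightarrow> nat \<Rightarrow> 'a list \<Rightarrow> 'a list \<Rightarrow> rat" where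
  "inc_pow F 0 = inc_delta"
| "inc_pow F (Suc n) = inc_conv F (inc_pow F n)"

definition inc_eta :: "'a list \<Rightarrow> 'a list \<Rightarrow> rat" where
  "inc_eta u v = (if wle u v \<and> length v = length u + 1 then 1 else 0)"

definition Pmat :: "'a list \<Rightarrow> 'a list \<Rightarrow> rat" where
  "Pmat u v = of_nat (binom_w v u)"

definition Hmat :: "'a list \<Rightarrow> 'a list \<Rightarrow> rat" where
  "Hmat u v = of_nat (binom_w v u) * inc_eta u v"

end

theory Submission
  imports Defs
begin


fun bw :: "'a list \<Rightarrow> 'a list \<Rightarrow> nat" where
  "bw v [] = 1"
| "bw [] (a#u) = 0"
| "bw (b#v) (a#u) = bw v (a#u) + (if a = b then bw v u else 0)"

lemma occ_nil: "occ_maps [] v = {\<lambda>_. 0}"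
  unfolding occ_maps_def by auto

lemma occ_cons_nil: "occ_maps (a#u) [] = {}"
  unfolding occ_maps_def by auto

lemma occ_mem: "\<phi> \<in> occ_maps u v \<longleftrightarrow> (\<forall>i<length u. \<phi> i < length v \<and> u ! i = v ! (\<phi> i))
                     \<and> (\<forall>i j. i < j \<and> j < length u \<longrightarrow> \<phi> i < \<phi> j)
                     \<and> (\<forall>i. length u \<le> i \<longrightarrow> \<phi> i = 0)"
  unfolding occ_maps_def by simp

lemma occ_B:
  "bij_betw (\<lambda>\<psi> i. if i < Suc (length u) then Suc (\<psi> i) else 0) (occ_maps (a#u) v)
     {\<phi>\<in>occ_maps (a#u) (b#v). \<phi> 0 \<noteq> 0}"
proof (rule bij_betw_byWitness[where f'="\<lambda>\<phi> i. if i < Suc (length u) then \<phi> i - 1 else 0"])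
  show "\<forall>\<psi>\<in>occ_maps (a#u) v. (\<lambda>i. if i < Suc (length u) then (if i < Suc (length u) then Suc (\<psi> i) else 0) - 1 else 0) = \<psi>"
    by (auto simp: occ_mem fun_eq_iff)
  show "\<forall>\<phi>\<in>{\<phi>\<in>occ_maps (a#u) (b#v). \<phi> 0 \<noteq> 0}. (\<lambda>i. if i < Suc (length u) then Suc (if i < Suc (length u) then \<phi> i - 1 else 0) else 0) = \<phi>"
  proof (intro ballI ext)
    fix \<phi> i assume h: "\<phi> \<in> {\<phi>\<in>occ_maps (a#u) (b#v). \<phi> 0 \<noteq> 0}"
    hence m: "\<phi> \<in> occ_maps (a#u) (b#v)" and z: "\<phi> 0 \<noteq> 0" by auto
    have "i < Suc (length u) \<Longrightarrow> \<phi> i \<noteq> 0"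
    proof -
      assume "i < Suc (length u)"
      show "\<phi> i \<noteq> 0"
      proof (cases i)
        case 0 thus ?thesis using z by simp
      next
        case (Suc k) thus ?thesis using m \<open>i < Suc (length u)\<close> unfolding occ_mem
          by (metis length_Cons less_nat_zero_code zero_less_Suc)
      qed
    qed
    thus "(if i < Suc (length u) then Suc (if i < Suc (length u) then \<phi> i - 1 else 0) else 0) = \<phi> i"
      using m unfolding occ_mem by auto
  qed
  show "(\<lambda>\<psi> i. if i < Suc (length u) then Suc (\<psi> i) else 0) ` occ_maps (a#u) v \<subseteq> {\<phi>\<in>occ_maps (a#u) (b#v). \<phi> 0 \<noteq> 0}"
    by (auto simp: occ_mem)
  show "(\<lambda>\<phi> i. if i < Suc (length u) then \<phi> i - 1 else 0) ` {\<phi>\<in>occ_maps (a#u) (b#v). \<phi> 0 \<noteq> 0} \<subseteq> occ_maps (a#u) v"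
  proof (rule image_subsetI)
    fix \<phi> assume "\<phi> \<in> {\<phi>\<in>occ_maps (a#u) (b#v). \<phi> 0 \<noteq> 0}"
    hence m: "\<phi> \<in> occ_maps (a#u) (b#v)" and z: "\<phi> 0 \<noteq> 0" by auto
    have nz: "i < Suc (length u) \<Longrightarrow> \<phi> i \<noteq> 0" for i
    proof (cases i)
      case 0 thus ?thesis using z by simp
    next
      case (Suc k) assume "i < Suc (length u)" thus ?thesis using m Suc unfolding occ_mem
        by (metis length_Cons less_nat_zero_code zero_less_Suc)
    qed
    let ?g = "\<lambda>i. if i < Suc (length u) then \<phi> i - 1 else 0"
    have 1: "\<forall>i<length (a#u). ?g i < length v \<and> (a#u)!i = v ! (?g i)"
    proof (intro allI impI)
      fix i assume i: "i < length (a#u)"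
      from m i have "\<phi> i < length (b#v)" "(a#u)!i = (b#v)!(\<phi> i)" unfolding occ_mem by auto
      with nz[of i] i show "?g i < length v \<and> (a#u)!i = v ! (?g i)"
        by (cases "\<phi> i") auto
    qed
    have 2: "\<forall>i j. i < j \<and> j < length (a#u) \<longrightarrow> ?g i < ?g j"
    proof (intro allI impI)
      fix i j assume ij: "i < j \<and> j < length (a#u)"
      with m have "\<phi> i < \<phi> j" unfolding occ_mem by blast
      with ij nz[of i] nz[of j] show "?g i < ?g j" by auto
    qed
    have 3: "\<forall>i. length (a#u) \<le> i \<longrightarrow> ?g i = 0" by simp
    show "?g \<in> occ_maps (a#u) v" unfolding occ_mem using 1 2 3 by blast
  qed
qed




lemma occ_A_ne: "a \<noteq> b \<Longrightarrow> {\<phi>\<in>occ_maps (a#u) (b#v). \<phi> 0 = 0} = {}"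
proof (rule ccontr)
  assume a: "a \<noteq> b" and "{\<phi>\<in>occ_maps (a#u) (b#v). \<phi> 0 = 0} \<noteq> {}"
  then obtain \<phi> where m: "\<phi> \<in> occ_maps (a#u) (b#v)" and z: "\<phi> 0 = 0" by blast
  from m have "(a#u)!0 = (b#v)!(\<phi> 0)" unfolding occ_mem by blast
  with z a show False by simp
qed




lemma occ_A:
  "bij_betw (\<lambda>\<psi> i. if i = 0 then 0 else if i \<le> length u then Suc (\<psi> (i - 1)) else 0) (occ_maps u v)
     {\<phi>\<in>occ_maps (a#u) (a#v). \<phi> 0 = 0}"
proof (rule bij_betw_byWitness[where f'="\<lambda>\<phi> i. if i < length u then \<phi> (Suc i) - 1 else 0"])
  show "\<forall>\<psi>\<in>occ_maps u v. (\<lambda>i. if i < length u then (if Suc i = 0 then 0 else if Suc i \<le> length u then Suc (\<psi> (Suc i - 1)) else 0) - 1 else 0) = \<psi>"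
    by (auto simp: occ_mem fun_eq_iff)
  show "\<forall>\<phi>\<in>{\<phi>\<in>occ_maps (a#u) (a#v). \<phi> 0 = 0}. (\<lambda>i. if i = 0 then 0 else if i \<le> length u then Suc (if i - 1 < length u then \<phi> (Suc (i - 1)) - 1 else 0) else 0) = \<phi>"
  proof (intro ballI ext)
    fix \<phi> i assume h: "\<phi> \<in> {\<phi>\<in>occ_maps (a#u) (a#v). \<phi> 0 = 0}"
    hence m: "\<phi> \<in> occ_maps (a#u) (a#v)" and z: "\<phi> 0 = 0" by auto
    show "(if i = 0 then 0 else if i \<le> length u then Suc (if i - 1 < length u then \<phi> (Suc (i - 1)) - 1 else 0) else 0) = \<phi> i"
    proof (cases i)
      case 0 thus ?thesis using z by simp
    next
      case (Suc k)
      show ?thesis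
      proof (cases "k < length u")
        case True
        with m z Suc have "0 < \<phi> i" unfolding occ_mem by (metis length_Cons not_less_eq zero_less_Suc)
        with True Suc show ?thesis by auto
      next
        case False with m Suc show ?thesis unfolding occ_mem by auto
      qed
    qed
  qed
  show "(\<lambda>\<psi> i. if i = 0 then 0 else if i \<le> length u then Suc (\<psi> (i - 1)) else 0) ` occ_maps u v \<subseteq> {\<phi>\<in>occ_maps (a#u) (a#v). \<phi> 0 = 0}"
  proof (rule image_subsetI)
    fix \<psi> assume m: "\<psi> \<in> occ_maps u v"
    let ?g = "\<lambda>i. if i = 0 then 0 else if i \<le> length u then Suc (\<psi> (i - 1)) else 0"
    have 1: "\<forall>i<length (a#u). ?g i < length (a#v) \<and> (a#u)!i = (a#v) ! (?g i)"
    proof (intro allI impI)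
      fix i assume i: "i < length (a#u)"
      show "?g i < length (a#v) \<and> (a#u)!i = (a#v) ! (?g i)"
      proof (cases i)
        case 0 thus ?thesis by simp
      next
        case (Suc k) with i m show ?thesis unfolding occ_mem by auto
      qed
    qed
    have 2: "\<forall>i j. i < j \<and> j < length (a#u) \<longrightarrow> ?g i < ?g j"
    proof (intro allI impI)
      fix i j assume ij: "i < j \<and> j < length (a#u)"
      show "?g i < ?g j"
      proof (cases i)
        case 0 with ij show ?thesis by auto
      next
        case (Suc k)
        then obtain l where "j = Suc l" using ij by (cases j) auto
        with Suc ij m show ?thesis unfolding occ_mem by auto
      qed
    qed
    have 3: "\<forall>i. length (a#u) \<le> i \<longrightarrow> ?g i = 0" by simp
    show "?g \<in> {\<phi>\<in>occ_maps (a#u) (a#v). \<phi> 0 = 0}" unfolding occ_mem using 1 2 3 by simp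
  qed
  show "(\<lambda>\<phi> i. if i < length u then \<phi> (Suc i) - 1 else 0) ` {\<phi>\<in>occ_maps (a#u) (a#v). \<phi> 0 = 0} \<subseteq> occ_maps u v"
  proof (rule image_subsetI)
    fix \<phi> assume "\<phi> \<in> {\<phi>\<in>occ_maps (a#u) (a#v). \<phi> 0 = 0}"
    hence m: "\<phi> \<in> occ_maps (a#u) (a#v)" and z: "\<phi> 0 = 0" by auto
    have nz: "i < length u \<Longrightarrow> 0 < \<phi> (Suc i)" for i
      using m z unfolding occ_mem by (metis length_Cons not_less_eq zero_less_Suc)
    let ?g = "\<lambda>i. if i < length u then \<phi> (Suc i) - 1 else 0"
    have 1: "\<forall>i<length u. ?g i < length v \<and> u!i = v ! (?g i)"
    proof (intro allI impI)
      fix i assume i: "i < length u"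
      from m i have "\<phi> (Suc i) < length (a#v)" "(a#u)!(Suc i) = (a#v)!(\<phi> (Suc i))" unfolding occ_mem by auto
      with nz[of i] i show "?g i < length v \<and> u!i = v ! (?g i)"
        by (cases "\<phi> (Suc i)") auto
    qed
    have 2: "\<forall>i j. i < j \<and> j < length u \<longrightarrow> ?g i < ?g j"
    proof (intro allI impI)
      fix i j assume ij: "i < j \<and> j < length u"
      with m have "\<phi> (Suc i) < \<phi> (Suc j)" unfolding occ_mem by auto
      with ij nz[of i] nz[of j] show "?g i < ?g j" by auto
    qed
    have 3: "\<forall>i. length u \<le> i \<longrightarrow> ?g i = 0" by simp
    show "?g \<in> occ_maps u v" unfolding occ_mem using 1 2 3 by blast
  qed
qed




lemma occ_card: "finite (occ_maps u v) \<and> card (occ_maps u v) = bw v u"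
proof (induction v u rule: bw.induct)
  case (1 v) thus ?case by (simp add: occ_nil)
next
  case (2 a u) thus ?case by (simp add: occ_cons_nil)
next
  case (3 b v a u)
  let ?S = "occ_maps (a#u) (b#v)"
  have eq: "?S = {\<phi>\<in>?S. \<phi> 0 = 0} \<union> {\<phi>\<in>?S. \<phi> 0 \<noteq> 0}" by blast
  have IH1: "finite (occ_maps (a#u) v) \<and> card (occ_maps (a#u) v) = bw v (a#u)" using 3 by blast
  have B: "finite {\<phi>\<in>?S. \<phi> 0 \<noteq> 0} \<and> card {\<phi>\<in>?S. \<phi> 0 \<noteq> 0} = bw v (a#u)"
    using bij_betw_finite[OF occ_B[of u a v b]] bij_betw_same_card[OF occ_B[of u a v b]] IH1 by simp
  have A: "finite {\<phi>\<in>?S. \<phi> 0 = 0} \<and> card {\<phi>\<in>?S. \<phi> 0 = 0} = (if a = b then bw v u else 0)"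
  proof (cases "a = b")
    case True
    have IH2: "finite (occ_maps u v) \<and> card (occ_maps u v) = bw v u" using 3 True by blast
    show ?thesis using bij_betw_finite[OF occ_A[of u v a]] bij_betw_same_card[OF occ_A[of u v a]] IH2 True by simp
  next
    case False thus ?thesis unfolding occ_A_ne[OF False] by simp
  qed
  have "card ({\<phi>\<in>?S. \<phi> 0 = 0} \<union> {\<phi>\<in>?S. \<phi> 0 \<noteq> 0}) = card {\<phi>\<in>?S. \<phi> 0 = 0} + card {\<phi>\<in>?S. \<phi> 0 \<noteq> 0}"
    by (rule card_Un_disjoint) (use A B in auto)
  hence "card ?S = card {\<phi>\<in>?S. \<phi> 0 = 0} + card {\<phi>\<in>?S. \<phi> 0 \<noteq> 0}" using eq[symmetric] by simp
  moreover have "finite ?S" using A B eq[symmetric] finite_Un[of "{\<phi>\<in>?S. \<phi> 0 = 0}" "{\<phi>\<in>?S. \<phi> 0 \<noteq> 0}"] by simp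
  ultimately show ?case using A B by simp
qed

lemma binom_bw: "binom_w v u = bw v u"
  unfolding binom_w_def using occ_card by blast





lemma bw_len: "0 < bw v u \<Longrightarrow> length u \<le> length v"
  by (induction v u rule: bw.induct) (auto split: if_splits)

lemma bw_same: "length v = length u \<Longrightarrow> bw v u = (if v = u then 1 else 0)"
proof (induction v u rule: bw.induct)
  case (3 b v a u)
  have "bw v (a#u) = 0" using bw_len[of v "a#u"] 3(3) by (cases "bw v (a#u)") auto
  thus ?case using 3 by auto
qed auto

lemma wle_bw: "wle u v \<longleftrightarrow> 0 < bw v u"
  unfolding wle_def binom_bw ..

lemma cons_split: "z \<noteq> [] \<Longrightarrow> bw (b#v) z = bw v z + (if hd z = b then bw v (tl z) else 0)"
  by (cases z) auto

lemma fin_len: "finite {z::'a::finite list. length z = n}"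
  using finite_lists_length_eq[of "UNIV::'a set" n] by simp

lemma reidx:
  fixes k :: "'a::finite list \<Rightarrow> rat"
  shows "(\<Sum>z\<in>{z. length z = Suc n}. if hd z = b then k (tl z) else 0) = (\<Sum>z\<in>{z. length z = n}. k z)"
proof -
  let ?h = "\<lambda>z. if hd z = b then k (tl z) else 0"
  have sub: "(\<lambda>z'. b#z') ` {z. length z = n} \<subseteq> {z. length z = Suc n}" by auto
  have "(\<Sum>z\<in>{z. length z = Suc n}. ?h z) = (\<Sum>z\<in>(\<lambda>z'. b#z') ` {z. length z = n}. ?h z)"
  proof (rule sum.mono_neutral_right[OF fin_len sub], rule ballI)
    fix z assume "z \<in> {z. length z = Suc n} - (\<lambda>z'. b#z') ` {z. length z = n}"
    then obtain c z' where z: "z = c#z'" "length z' = n" "z \<notin> (\<lambda>z'. b#z') ` {z. length z = n}"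
      by (cases z) auto
    hence "c \<noteq> b" by auto
    thus "?h z = 0" using z by simp
  qed
  also have "\<dots> = (\<Sum>z\<in>{z. length z = n}. ?h (b#z))"
    by (subst sum.reindex) (auto simp: inj_on_def)
  finally show ?thesis by simp
qed

lemma identD:
  fixes u v :: "'a::finite list"
  shows "(\<Sum>z\<in>{z. length z = Suc (length u)}. of_nat (bw z u * bw v z) :: rat)
       = (of_nat (length v) - of_nat (length u)) * of_nat (bw v u)"
proof (induction v arbitrary: u)
  case Nil
  have "(\<Sum>z\<in>{z. length z = Suc (length u)}. of_nat (bw z u * bw [] z) :: rat) = 0"
    by (rule sum.neutral) (auto, case_tac x, auto)
  moreover have "bw [] u = (if u = [] then 1 else 0)" by (cases u) auto
  ultimately show ?case by simp
next
  case (Cons b v)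
  let ?Z = "{z::'a list. length z = Suc (length u)}"
  let ?Z' = "{z::'a list. length z = length u}"
  have "(\<Sum>z\<in>?Z. of_nat (bw z u * bw (b#v) z) :: rat)
      = (\<Sum>z\<in>?Z. of_nat (bw z u * bw v z) + (if hd z = b then of_nat (bw (b # tl z) u * bw v (tl z)) else 0))"
  proof (rule sum.cong[OF refl])
    fix z assume "z \<in> ?Z"
    then obtain c z' where z: "z = c#z'" by (cases z) auto
    show "of_nat (bw z u * bw (b#v) z) = (of_nat (bw z u * bw v z) + (if hd z = b then of_nat (bw (b # tl z) u * bw v (tl z)) else 0) :: rat)"
      using z by (simp add: algebra_simps)
  qed
  also have "\<dots> = (\<Sum>z\<in>?Z. of_nat (bw z u * bw v z)) + (\<Sum>z\<in>?Z'. of_nat (bw (b # z) u * bw v z))"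
  proof -
    have r: "(\<Sum>z\<in>?Z. if hd z = b then of_nat (bw (b#tl z) u * bw v (tl z)) else 0) = (\<Sum>z\<in>?Z'. of_nat (bw (b#z) u * bw v z) :: rat)"
      using reidx[where n="length u" and b=b and k="\<lambda>z. of_nat (bw (b#z) u * bw v z)"] by simp
    show ?thesis by (simp only: sum.distrib r)
  qed
  also have "(\<Sum>z\<in>?Z'. of_nat (bw (b # z) u * bw v z) :: rat)
       = of_nat (bw v u) + (case u of [] \<Rightarrow> 0 | a#u' \<Rightarrow> if a = b then (of_nat (length v) - of_nat (length u')) * of_nat (bw v u') else 0)"
  proof (cases u)
    case Nil
    have "?Z' = {[]}" using Nil by auto
    thus ?thesis using Nil by simp
  next
    case (Cons a u')
    have "(\<Sum>z\<in>?Z'. of_nat (bw (b # z) u * bw v z) :: rat)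
        = (\<Sum>z\<in>?Z'. (if z = u then of_nat (bw v z) else 0) + (if a = b then of_nat (bw z u' * bw v z) else 0))"
    proof (rule sum.cong[OF refl])
      fix z assume "z \<in> ?Z'"
      hence "bw z (a#u') = (if z = a#u' then 1 else 0)" using bw_same[of z "a#u'"] Cons by simp
      thus "of_nat (bw (b # z) u * bw v z) = ((if z = u then of_nat (bw v z) else 0) + (if a = b then of_nat (bw z u' * bw v z) else 0) :: rat)"
        using Cons by (simp add: algebra_simps)
    qed
    also have "\<dots> = of_nat (bw v u) + (if a = b then (\<Sum>z\<in>?Z'. of_nat (bw z u' * bw v z)) else 0)"
      using Cons by (simp add: sum.distrib fin_len)
    also have "(\<Sum>z\<in>?Z'. of_nat (bw z u' * bw v z) :: rat) = (of_nat (length v) - of_nat (length u')) * of_nat (bw v u')"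
      using Cons.IH[of u'] Cons by simp
    finally show ?thesis using Cons by simp
  qed
  finally have eq: "(\<Sum>z\<in>?Z. of_nat (bw z u * bw (b#v) z) :: rat) = (of_nat (length v) - of_nat (length u)) * of_nat (bw v u) + (of_nat (bw v u) + (case u of [] \<Rightarrow> 0 | a#u' \<Rightarrow> if a = b then (of_nat (length v) - of_nat (length u')) * of_nat (bw v u') else 0))"
    using Cons.IH[of u] by simp
  show ?case
  proof (cases u)
    case Nil thus ?thesis using eq by (simp add: algebra_simps)
  next
    case (Cons a u') thus ?thesis using eq by (cases "a = b") (simp_all add: algebra_simps)
  qed
qed




lemma fin_S: "finite {z::'a::finite list. wle x z \<and> wle z y}"
proof (rule finite_subset)
  show "{z::'a list. wle x z \<and> wle z y} \<subseteq> {xs. set xs \<subseteq> UNIV \<and> length xs \<le> length y}"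
    using bw_len by (auto simp: wle_bw)
  show "finite {xs::'a list. set xs \<subseteq> UNIV \<and> length xs \<le> length y}"
    by (rule finite_lists_length_le) simp
qed

lemma Hmat_eq: "Hmat u z = of_nat (bw z u) * (if length z = Suc (length u) then 1 else 0)"
  unfolding Hmat_def inc_eta_def binom_bw wle_bw by auto

lemma pow_eq:
  fixes u v :: "'a::finite list"
  shows "inc_pow Hmat k u v = (if length v = length u + k then of_nat (fact k * bw v u) else 0)"
proof (induction k arbitrary: u)
  case 0
  show ?case by (simp add: inc_delta_def bw_same)
next
  case (Suc k)
  let ?S = "{z. wle u z \<and> wle z v}"
  let ?Z = "{z::'a list. length z = Suc (length u)}"
  let ?f = "\<lambda>z. Hmat u z * inc_pow Hmat k z v"
  have f: "?f z = (if length z = Suc (length u) \<and> length v = length z + k then of_nat (bw z u * bw v z) * of_nat (fact k) else 0)" for z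
    by (simp add: Hmat_eq Suc.IH)
  have "inc_pow Hmat (Suc k) u v = (\<Sum>z\<in>?S. ?f z)" by (simp add: inc_conv_def)
  also have "\<dots> = (\<Sum>z\<in>?S \<inter> ?Z. ?f z)"
    by (rule sum.mono_neutral_right[OF fin_S]) (auto simp: f)
  also have "\<dots> = (\<Sum>z\<in>?Z. ?f z)"
  proof (rule sum.mono_neutral_left[OF fin_len], simp, rule ballI)
    fix z assume "z \<in> ?Z - ?S \<inter> ?Z"
    hence "bw z u = 0 \<or> bw v z = 0" by (auto simp: wle_bw)
    thus "?f z = 0" by (auto simp: f)
  qed
  also have "\<dots> = (if length v = length u + Suc k then of_nat (fact (Suc k) * bw v u) else 0)"
  proof (cases "length v = length u + Suc k")
    case True
    have "(\<Sum>z\<in>?Z. ?f z) = (\<Sum>z\<in>?Z. of_nat (bw z u * bw v z)) * of_nat (fact k)"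
      by (simp add: f True sum_distrib_right)
    also have "\<dots> = (of_nat (length v) - of_nat (length u)) * of_nat (bw v u) * of_nat (fact k)"
      using identD[of u v] by simp
    also have "\<dots> = of_nat (fact (Suc k) * bw v u)"
      using True by (simp add: algebra_simps)
    finally show ?thesis using True by simp
  next
    case False
    thus ?thesis by (simp add: f)
  qed
  finally show ?case .
qed

theorem mainTheorem2:
  fixes u v :: "'a::finite list"
  assumes "wle u v"
  shows "finite {k. inc_pow (Hmat :: 'a list \<Rightarrow> 'a list \<Rightarrow> rat) k u v \<noteq> 0}
       \<and> Pmat u v = (\<Sum>k\<in>{k. inc_pow (Hmat :: 'a list \<Rightarrow> 'a list \<Rightarrow> rat) k u v \<noteq> 0}.
                        inc_pow Hmat k u v / fact k)"
proof -
  have pos: "0 < bw v u" using assms by (simp add: wle_bw)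
  hence le: "length u \<le> length v" by (rule bw_len)
  define k0 where "k0 = length v - length u"
  have set: "{k. inc_pow (Hmat :: 'a list \<Rightarrow> 'a list \<Rightarrow> rat) k u v \<noteq> 0} = {k0}"
    using pos le by (auto simp: pow_eq k0_def)
  show ?thesis
    unfolding set using le pos by (simp add: pow_eq k0_def Pmat_def binom_bw)
qed


end
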